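(* Let $N\in\mathbb N$, $\beta\ge0$, and let $t\mapsto \boldsymbol c(t)$ be a differentiable curve in the set of $N\times N$ matrices with nonnegative entries. Then $$\frac{d}{dt}p_N(\beta,\boldsymbol c(t))=\frac{1}{2N^2}\sum_{i,j=1}^N\frac{dc_{ij}}{dt}\,\mathbb E_{N,\boldsymbol c(t)}\Big[\ln\Big(1-(1-e^{-\beta})\langle\delta(\sigma_i,\sigma_j)\rangle_{N,\beta J}\Big)\Big].$$
   Context: Fix an integer $q\ge2$, $[q]=\{1,\dots,q\}$. For $\sigma\in[q]^N$ and a real $N\times N$ matrix $J$, $H_N(\sigma,J)=\sum_{i,j=1}^N J_{ij}\delta(\sigma_i,\sigma_j)$ ($\delta$ the Kronecker delta), $Z_N(J)=\sum_{\sigma\in[q]^N}e^{-H_N(\sigma,J)}$, $\omega_{N,J}(\sigma)=e^{-H_N(\sigma,J)}/Z_N(J)$, and $\langle f\rangle_{N,J}=\sum_\sigma f(\sigma)\omega_{N,J}(\sigma)$. For an $N\times N$ matrix $\boldsymbol c=(c_{ij})$ with nonnegative entries, $\mathbb P_{N,\boldsymbol c}$ is the law of a random matrix $J$ with independent entries $J_{ij}\sim$ Poisson with mean $c_{ij}/(2N)$, and $\mathbb E_{N,\boldsymbol c}$ its expectation. The quenched pressure is $p_N(\beta,\boldsymbol c)=\mathbb E_{N,\boldsymbol c}[N^{-1}\ln Z_N(\beta J)]$. *)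

theory Defs
  imports "HOL-Analysis.Analysis" "HOL-Probability.Probability"
begin

text \<open>Spin indices are 0..N-1 (instead of 1..N); colours are 1..q.
  Interaction matrices J :: nat => nat => real (only entries i,j < N matter).\<close>

definition kdelta :: "nat \<Rightarrow> nat \<Rightarrow> real" where
  "kdelta a b = (if a = b then 1 else 0)"

definition configs :: "nat \<Rightarrow> nat \<Rightarrow> (nat \<Rightarrow> nat) set" where
  "configs q N = PiE {..<N} (\<lambda>_. {1..q})"

definition hamil :: "nat \<Rightarrow> (nat \<Rightarrow> nat) \<Rightarrow> (nat \<Rightarrow> nat \<Rightarrow> real) \<Rightarrow> real" where
  "hamil N \<sigma> J = (\<Sum>i<N. \<Sum>j<N. J i j * kdelta (\<sigma> i) (\<sigma> j))"

definition partfun :: "nat \<Rightarrow> nat \<Rightarrow> (nat \<Rightarrow> nat \<Rightarrow> real) \<Rightarrow> real" where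
  "partfun q N J = (\<Sum>\<sigma>\<in>configs q N. exp (- hamil N \<sigma> J))"

definition gibbs :: "nat \<Rightarrow> nat \<Rightarrow> (nat \<Rightarrow> nat \<Rightarrow> real) \<Rightarrow> (nat \<Rightarrow> nat) \<Rightarrow> real" where
  "gibbs q N J \<sigma> = exp (- hamil N \<sigma> J) / partfun q N J"

definition gibbs_avg :: "nat \<Rightarrow> nat \<Rightarrow> (nat \<Rightarrow> nat \<Rightarrow> real) \<Rightarrow> ((nat \<Rightarrow> nat) \<Rightarrow> real) \<Rightarrow> real" where
  "gibbs_avg q N J f = (\<Sum>\<sigma>\<in>configs q N. f \<sigma> * gibbs q N J \<sigma>)"

definition poisson_law :: "real \<Rightarrow> nat pmf" where
  "poisson_law r = (if r > 0 then poisson_pmf r else return_pmf 0)"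

definition J_law :: "nat \<Rightarrow> (nat \<Rightarrow> nat \<Rightarrow> real) \<Rightarrow> (nat \<times> nat \<Rightarrow> nat) pmf" where
  "J_law N c = Pi_pmf ({..<N} \<times> {..<N}) 0 (\<lambda>(i,j). poisson_law (c i j / (2 * real N)))"

definition EJ :: "nat \<Rightarrow> (nat \<Rightarrow> nat \<Rightarrow> real) \<Rightarrow> ((nat \<times> nat \<Rightarrow> nat) \<Rightarrow> real) \<Rightarrow> real" where
  "EJ N c F = measure_pmf.expectation (J_law N c) F"

definition scaleJ :: "real \<Rightarrow> (nat \<times> nat \<Rightarrow> nat) \<Rightarrow> nat \<Rightarrow> nat \<Rightarrow> real" where
  "scaleJ \<beta> J = (\<lambda>i j. \<beta> * real (J (i, j)))"

definition pressure :: "nat \<Rightarrow> nat \<Rightarrow> real \<Rightarrow> (nat \<Rightarrow> nat \<Rightarrow> real) \<Rightarrow> real" where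
  "pressure q N \<beta> c = EJ N c (\<lambda>J. ln (partfun q N (scaleJ \<beta> J)) / real N)"

end

theory Submission
  imports Defs
begin

definition pp :: "real \<Rightarrow> nat \<Rightarrow> real" where
  "pp x m = x ^ m / fact m * exp (- x)"

lemma pmf_poisson_law: "0 \<le> x \<Longrightarrow> pmf (poisson_law x) m = pp x m"
  by (auto simp: poisson_law_def pp_def indicator_def)

lemma pp_deriv:
  "((\<lambda>x. pp x m) has_real_derivative ((if m = 0 then 0 else pp x (m - 1)) - pp x m)) (at x)"
proof -
  have "((\<lambda>x. x ^ m / fact m * exp (- x)) has_real_derivative
          (real m * x ^ (m - 1) / fact m * exp (- x) + x ^ m / fact m * (- exp (- x)))) (at x)"
    by (auto intro!: derivative_eq_intros simp: diff_divide_distrib mult_ac)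
  moreover have "real m * x ^ (m - 1) / fact m * exp (- x) + x ^ m / fact m * (- exp (- x))
      = (if m = 0 then 0 else pp x (m - 1)) - pp x m"
  proof (cases m)
    case 0 then show ?thesis by (simp add: pp_def)
  next
    case (Suc k)
    have f: "fact m = real m * (fact k :: real)" using Suc by (simp add: fact_Suc)
    have "real m * x ^ (m - 1) / fact m = x ^ k / fact k"
      unfolding f using Suc by simp
    then show ?thesis using Suc by (simp add: pp_def algebra_simps)
  qed
  ultimately show ?thesis unfolding pp_def by simp
qed

lemma pp_nonneg: "0 \<le> x \<Longrightarrow> 0 \<le> pp x m"
  by (simp add: pp_def)

lemma pp_le: "0 \<le> x \<Longrightarrow> x \<le> L \<Longrightarrow> pp x m \<le> L ^ m / fact m"
proof -
  assume a: "0 \<le> x" "x \<le> L"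
  have "x ^ m / fact m * exp (- x) \<le> x ^ m / fact m * 1"
    using a by (intro mult_left_mono) auto
  also have "\<dots> \<le> L ^ m / fact m"
    using a by (auto intro!: divide_right_mono power_mono)
  finally show ?thesis by (simp add: pp_def)
qed

lemma pp_bound: "0 \<le> x \<Longrightarrow> x \<le> L \<Longrightarrow> 1 \<le> L \<Longrightarrow> \<bar>pp x m\<bar> \<le> (2 * L) ^ m / fact m"
proof -
  assume a: "0 \<le> x" "x \<le> L" "1 \<le> L"
  have "\<bar>pp x m\<bar> = pp x m" using a pp_nonneg by simp
  also have "\<dots> \<le> L ^ m / fact m" using a pp_le by simp
  also have "\<dots> \<le> (2 * L) ^ m / fact m"
    using a by (auto intro!: divide_right_mono power_mono)
  finally show ?thesis .
qed

lemma dpp_bound: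
  assumes "0 \<le> x" "x \<le> L" "1 \<le> L"
  shows "\<bar>(if m = 0 then 0 else pp x (m - 1)) - pp x m\<bar> \<le> (2 * L) ^ m / fact m"
proof (cases m)
  case 0 then show ?thesis using pp_bound[OF assms, of 0] by simp
next
  case (Suc k)
  have L0: "0 \<le> L" using assms by simp
  have "\<bar>pp x k - pp x m\<bar> \<le> pp x k + pp x m"
    using pp_nonneg[OF assms(1)] by (simp add: abs_le_iff)
  also have "\<dots> \<le> L ^ k / fact k + L ^ m / fact m"
    using pp_le[OF assms(1,2)] by (intro add_mono) auto
  also have "L ^ k / fact k = real m * L ^ k / fact m"
    using Suc by (simp add: fact_Suc)
  also have "real m * L ^ k \<le> real m * L ^ m"
    using Suc assms by (intro mult_left_mono power_increasing) auto
  hence "real m * L ^ k / fact m \<le> real m * L ^ m / fact m"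
    by (intro divide_right_mono) auto
  hence "real m * L ^ k / fact m + L ^ m / fact m \<le> (real m + 1) * L ^ m / fact m"
    by (simp add: field_simps)
  also have "(real m + 1) * L ^ m \<le> 2 ^ m * L ^ m"
  proof -
    have "real m + 1 \<le> 2 ^ m"
    proof -
      have "m + 1 \<le> 2 ^ m" using Suc by (induction k arbitrary: m) auto
      then show ?thesis by (metis of_nat_le_iff of_nat_Suc of_nat_numeral of_nat_power add.commute plus_1_eq_Suc)
    qed
    then show ?thesis using L0 by (intro mult_right_mono) auto
  qed
  hence "(real m + 1) * L ^ m / fact m \<le> (2 * L) ^ m / fact m"
    by (intro divide_right_mono) (auto simp: power_mult_distrib)
  finally show ?thesis using Suc by simp
qed

lemma pp_lip_aux:
  assumes "0 \<le> a" "a < b" "b \<le> L" "1 \<le> L"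
  shows "\<bar>pp b m - pp a m\<bar> \<le> (b - a) * ((2 * L) ^ m / fact m)"
proof -
  obtain z where z: "a < z" "z < b"
    "pp b m - pp a m = (b - a) * ((if m = 0 then 0 else pp z (m - 1)) - pp z m)"
    using MVT2[OF assms(2), of "\<lambda>x. pp x m" "\<lambda>x. (if m = 0 then 0 else pp x (m - 1)) - pp x m"]
      pp_deriv by blast
  have "\<bar>pp b m - pp a m\<bar> = (b - a) * \<bar>(if m = 0 then 0 else pp z (m - 1)) - pp z m\<bar>"
    using z assms by (simp add: abs_mult)
  also have "\<dots> \<le> (b - a) * ((2 * L) ^ m / fact m)"
    using z assms by (intro mult_left_mono dpp_bound) auto
  finally show ?thesis .
qed

lemma pp_lip:
  assumes "0 \<le> x" "x \<le> L" "0 \<le> y" "y \<le> L" "1 \<le> L"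
  shows "\<bar>pp x m - pp y m\<bar> \<le> \<bar>x - y\<bar> * ((2 * L) ^ m / fact m)"
proof -
  consider "x < y" | "x = y" | "y < x" by linarith
  then show ?thesis
  proof cases
    case 1
    then show ?thesis using pp_lip_aux[of x y L m] assms by (simp add: abs_minus_commute)
  next
    case 3
    then show ?thesis using pp_lip_aux[of y x L m] assms by simp
  qed simp
qed

lemma prod_diff_bound:
  fixes a b u e :: "'i \<Rightarrow> real"
  assumes "finite A"
    and "\<And>k. k \<in> A \<Longrightarrow> \<bar>a k\<bar> \<le> u k"
    and "\<And>k. k \<in> A \<Longrightarrow> \<bar>b k\<bar> \<le> u k"
    and "\<And>k. k \<in> A \<Longrightarrow> \<bar>a k - b k\<bar> \<le> e k"
  shows "\<bar>(\<Prod>k\<in>A. a k) - (\<Prod>k\<in>A. b k)\<bar> \<le> (\<Sum>k\<in>A. e k * (\<Prod>l\<in>A - {k}. u l))"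
  using assms
proof (induction A rule: finite_induct)
  case empty
  then show ?case by simp
next
  case (insert x A)
  have IH: "\<bar>(\<Prod>k\<in>A. a k) - (\<Prod>k\<in>A. b k)\<bar> \<le> (\<Sum>k\<in>A. e k * (\<Prod>l\<in>A - {k}. u l))"
    using insert by blast
  have pa: "\<bar>\<Prod>k\<in>A. a k\<bar> \<le> (\<Prod>k\<in>A. u k)"
    unfolding abs_prod using insert by (intro prod_mono) auto
  have ux: "\<bar>b x\<bar> \<le> u x" "\<bar>a x - b x\<bar> \<le> e x" using insert by auto
  have "(\<Prod>k\<in>insert x A. a k) - (\<Prod>k\<in>insert x A. b k)
      = (a x - b x) * (\<Prod>k\<in>A. a k) + b x * ((\<Prod>k\<in>A. a k) - (\<Prod>k\<in>A. b k))"
    using insert by (simp add: algebra_simps)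
  hence "\<bar>(\<Prod>k\<in>insert x A. a k) - (\<Prod>k\<in>insert x A. b k)\<bar>
      \<le> \<bar>a x - b x\<bar> * \<bar>\<Prod>k\<in>A. a k\<bar> + \<bar>b x\<bar> * \<bar>(\<Prod>k\<in>A. a k) - (\<Prod>k\<in>A. b k)\<bar>"
    by (metis abs_mult abs_triangle_ineq)
  also have "\<dots> \<le> e x * (\<Prod>k\<in>A. u k) + u x * (\<Sum>k\<in>A. e k * (\<Prod>l\<in>A - {k}. u l))"
    using ux pa IH by (intro add_mono mult_mono) auto
  also have "\<dots> = (\<Sum>k\<in>insert x A. e k * (\<Prod>l\<in>insert x A - {k}. u l))"
  proof -
    have "\<And>k. k \<in> A \<Longrightarrow> insert x A - {k} = insert x (A - {k})" using insert by auto
    hence "(\<Sum>k\<in>A. e k * (\<Prod>l\<in>insert x A - {k}. u l)) = (\<Sum>k\<in>A. u x * (e k * (\<Prod>l\<in>A - {k}. u l)))"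
      using insert by (intro sum.cong) (auto simp: mult_ac)
    moreover have "insert x A - {x} = A" using insert by auto
    ultimately show ?thesis using insert by (simp add: sum_distrib_left)
  qed
  finally show ?case .
qed

lemma dc_at:
  fixes F :: "real \<Rightarrow> 'a \<Rightarrow> real" and f w :: "'a \<Rightarrow> real"
  assumes w: "integrable (count_space UNIV) w"
    and bnd: "eventually (\<lambda>y. \<forall>x. \<bar>F y x\<bar> \<le> w x) (at t)"
    and lim: "\<And>x. ((\<lambda>y. F y x) \<longlongrightarrow> f x) (at t)"
  shows "((\<lambda>y. integral\<^sup>L (count_space UNIV) (F y)) \<longlongrightarrow> integral\<^sup>L (count_space UNIV) f) (at t)"
proof (subst tendsto_at_iff_sequentially, intro allI impI)
  fix X :: "nat \<Rightarrow> real"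
  assume X: "\<forall>i. X i \<in> UNIV - {t}" "X \<longlonglongrightarrow> t"
  have fl: "filterlim X (at t) sequentially"
    using X by (auto simp: filterlim_at)
  from filterlim_iff[THEN iffD1, OF fl, rule_format, OF bnd]
  obtain N where N: "\<And>n. N \<le> n \<Longrightarrow> \<forall>x. \<bar>F (X n) x\<bar> \<le> w x"
    by (auto simp: eventually_sequentially)
  have "(\<lambda>n. integral\<^sup>L (count_space UNIV) (F (X (n + N)))) \<longlonglongrightarrow> integral\<^sup>L (count_space UNIV) f"
  proof (rule integral_dominated_convergence[where w = w])
    show "AE x in count_space UNIV. (\<lambda>i. F (X (i + N)) x) \<longlonglongrightarrow> f x"
    proof (intro AE_I2)
      fix x
      have "(\<lambda>i. F (X i) x) \<longlonglongrightarrow> f x"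
        using lim[of x] fl by (rule filterlim_compose)
      then show "(\<lambda>i. F (X (i + N)) x) \<longlonglongrightarrow> f x"
        by (rule LIMSEQ_ignore_initial_segment)
    qed
    show "AE x in count_space UNIV. norm (F (X (i + N)) x) \<le> w x" for i
      using N[of "i + N"] by auto
  qed (auto simp: w)
  then show "((\<lambda>y. integral\<^sup>L (count_space UNIV) (F y)) \<circ> X) \<longlonglongrightarrow> integral\<^sup>L (count_space UNIV) f"
    unfolding comp_def by (rule LIMSEQ_offset)
qed

definition dpp :: "real \<Rightarrow> nat \<Rightarrow> real" where
  "dpp x m = (if m = 0 then 0 else pp x (m - 1)) - pp x m"

lemma pp_pred_bound:
  assumes "0 \<le> x" "x \<le> L" "1 \<le> L" "m \<noteq> 0"
  shows "\<bar>pp x (m - 1)\<bar> \<le> (2 * L) ^ m / fact m"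
proof -
  obtain k where Suc: "m = Suc k" using assms(4) by (cases m) auto
  have L0: "0 \<le> L" using assms by simp
  have "\<bar>pp x (m - 1)\<bar> = pp x k" using Suc pp_nonneg[OF assms(1)] by simp
  also have "\<dots> \<le> L ^ k / fact k" using pp_le[OF assms(1,2)] by simp
  also have "L ^ k / fact k = real m * L ^ k / fact m"
    using Suc by (simp add: fact_Suc)
  also have "real m * L ^ k \<le> real m * L ^ m"
    using Suc assms by (intro mult_left_mono power_increasing) auto
  hence "real m * L ^ k / fact m \<le> real m * L ^ m / fact m"
    by (intro divide_right_mono) auto
  also have "real m * L ^ m \<le> 2 ^ m * L ^ m"
  proof -
    have "real m \<le> 2 ^ m"
    proof -
      have "m \<le> 2 ^ m" by (metis less_exp less_imp_le)
      then show ?thesis by (metis of_nat_le_iff of_nat_numeral of_nat_power)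
    qed
    then show ?thesis using L0 by (intro mult_right_mono) auto
  qed
  hence "real m * L ^ m / fact m \<le> (2 * L) ^ m / fact m"
    by (intro divide_right_mono) (auto simp: power_mult_distrib)
  finally show ?thesis .
qed

lemma sum_upd:
  assumes "finite I" "k \<in> I"
  shows "(\<Sum>l\<in>I. (n(k := v)) l) = v + (\<Sum>l\<in>I - {k}. n l)"
proof -
  have "(\<Sum>l\<in>I. (n(k := v)) l) = (n(k := v)) k + (\<Sum>l\<in>I - {k}. (n(k := v)) l)"
    using assms by (rule sum.remove)
  also have "(\<Sum>l\<in>I - {k}. (n(k := v)) l) = (\<Sum>l\<in>I - {k}. n l)"
    by (intro sum.cong) auto
  finally show ?thesis by simp
qed

locale PS =
  fixes I :: "'i set" and mu :: "real \<Rightarrow> 'i \<Rightarrow> real" and mu' :: "'i \<Rightarrow> real"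
    and g :: "('i \<Rightarrow> nat) \<Rightarrow> real" and C :: real and U :: "real set" and t :: real
  assumes fin: "finite I" and U: "open U" and tU: "t \<in> U"
    and nonneg: "\<And>s k. s \<in> U \<Longrightarrow> k \<in> I \<Longrightarrow> 0 \<le> mu s k"
    and der: "\<And>k. k \<in> I \<Longrightarrow> ((\<lambda>s. mu s k) has_real_derivative mu' k) (at t)"
    and gb: "\<And>n. \<bar>g n\<bar> \<le> C * 2 ^ (\<Sum>k\<in>I. n k)"
begin

definition supp :: "('i \<Rightarrow> nat) \<Rightarrow> bool" where
  "supp n \<longleftrightarrow> (\<forall>x. x \<notin> I \<longrightarrow> n x = 0)"

definition W :: "real \<Rightarrow> ('i \<Rightarrow> nat) \<Rightarrow> real" where
  "W s n = (if supp n then \<Prod>k\<in>I. pp (mu s k) (n k) else 0)"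

definition V :: "real \<Rightarrow> ('i \<Rightarrow> nat) \<Rightarrow> real" where
  "V L n = (if supp n then \<Prod>k\<in>I. L ^ (n k) / fact (n k) else 0)"

definition P :: "real \<Rightarrow> ('i \<Rightarrow> nat) pmf" where
  "P s = Pi_pmf I 0 (\<lambda>k. poisson_law (mu s k))"

lemma C_nonneg: "0 \<le> C"
proof -
  have "0 \<le> C * 2 ^ (\<Sum>k\<in>I. (0::nat))" using gb[of "\<lambda>_. 0"] by linarith
  then show ?thesis by simp
qed

lemma V_integrable:
  assumes "0 < L"
  shows "integrable (count_space UNIV) (V L)"
proof -
  have eq: "V L n = exp (L * real (card I)) * pmf (Pi_pmf I 0 (\<lambda>_. poisson_pmf L)) n" for n
  proof (cases "supp n")
    case True
    have "pmf (Pi_pmf I 0 (\<lambda>_. poisson_pmf L)) n = (\<Prod>k\<in>I. L ^ (n k) / fact (n k) * exp (- L))"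
      using True assms by (simp add: pmf_Pi[OF fin] supp_def)
    also have "\<dots> = (\<Prod>k\<in>I. L ^ (n k) / fact (n k)) * (\<Prod>k\<in>I. exp (- L))"
      by (rule prod.distrib)
    also have "(\<Prod>k\<in>I. exp (- L)) = exp (- L) ^ card I"
      by simp
    also have "exp (- L) ^ card I = exp (- (L * real (card I)))"
      by (simp add: exp_of_nat_mult[symmetric] mult_ac)
    finally show ?thesis using True by (simp add: V_def exp_minus field_simps)
  next
    case False
    have "pmf (Pi_pmf I 0 (\<lambda>_. poisson_pmf L)) n = 0"
      using False by (subst pmf_Pi[OF fin]) (auto simp: supp_def)
    then show ?thesis using False by (simp add: V_def)
  qed
  show ?thesis unfolding eq[abs_def]
    by (intro integrable_mult_right integrable_pmf)
qed

lemma V_nonneg: "0 \<le> L \<Longrightarrow> 0 \<le> V L n"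
  by (auto simp: V_def intro!: prod_nonneg)

lemma pmf_P: "s \<in> U \<Longrightarrow> pmf (P s) n = W s n"
  using nonneg by (auto simp: P_def W_def pmf_Pi[OF fin] supp_def pmf_poisson_law intro!: prod.cong)

lemma E_eq: "s \<in> U \<Longrightarrow> measure_pmf.expectation (P s) F = integral\<^sup>L (count_space UNIV) (\<lambda>n. W s n * F n)"
  by (simp add: pmf_expectation_eq_infsetsum infsetsum_def pmf_P)

lemma prod_bound:
  assumes "supp n" "\<And>k. k \<in> I \<Longrightarrow> \<bar>a k\<bar> \<le> (2 * L) ^ (n k) / fact (n k)"
    and h: "\<bar>h\<bar> \<le> C' * 2 ^ (\<Sum>k\<in>I. n k)" and L: "0 \<le> L"
  shows "\<bar>(\<Prod>k\<in>I. a k) * h\<bar> \<le> C' * V (4 * L) n"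
proof -
  have C': "0 \<le> C'" using h by (metis abs_ge_zero order_trans zero_le_mult_iff zero_less_numeral zero_less_power not_le)
  have "\<bar>(\<Prod>k\<in>I. a k) * h\<bar> = (\<Prod>k\<in>I. \<bar>a k\<bar>) * \<bar>h\<bar>"
    by (simp add: abs_mult abs_prod)
  also have "\<dots> \<le> (\<Prod>k\<in>I. (2 * L) ^ (n k) / fact (n k)) * (C' * (\<Prod>k\<in>I. 2 ^ (n k)))"
    using assms by (intro mult_mono prod_mono) (auto simp: power_sum intro!: prod_nonneg)
  also have "\<dots> = C' * ((\<Prod>k\<in>I. (2 * L) ^ (n k) / fact (n k)) * (\<Prod>k\<in>I. 2 ^ (n k)))"
    by (simp only: mult_ac)
  also have "\<dots> = C' * (\<Prod>k\<in>I. (2 * L) ^ (n k) / fact (n k) * 2 ^ (n k))"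
    by (simp only: prod.distrib)
  also have "(\<Prod>k\<in>I. (2 * L) ^ (n k) / fact (n k) * 2 ^ (n k)) = (\<Prod>k\<in>I. (4 * L) ^ (n k) / fact (n k))"
  proof (intro prod.cong refl)
    fix k
    have "(2 * L) ^ (n k) * 2 ^ (n k) = (2 * L * 2) ^ (n k)"
      by (rule power_mult_distrib[symmetric])
    also have "2 * L * 2 = 4 * L" by simp
    finally show "(2 * L) ^ (n k) / fact (n k) * 2 ^ (n k) = (4 * L) ^ (n k) / fact (n k)"
      by (simp add: field_simps)
  qed
  finally show ?thesis using assms by (simp add: V_def)
qed

lemma W_bound:
  assumes "\<And>k. k \<in> I \<Longrightarrow> 0 \<le> mu s k \<and> mu s k \<le> L" "1 \<le> L"
    "\<bar>h\<bar> \<le> C' * 2 ^ (\<Sum>k\<in>I. n k)"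
  shows "\<bar>W s n * h\<bar> \<le> C' * V (4 * L) n"
proof (cases "supp n")
  case True
  have b: "\<And>k. k \<in> I \<Longrightarrow> \<bar>pp (mu s k) (n k)\<bar> \<le> (2 * L) ^ (n k) / fact (n k)"
    using assms by (intro pp_bound) auto
  have "\<bar>(\<Prod>k\<in>I. pp (mu s k) (n k)) * h\<bar> \<le> C' * V (4 * L) n"
    using assms(2) by (intro prod_bound[OF True b assms(3)]) auto
  then show ?thesis using True by (simp add: W_def)
qed (simp add: W_def V_def)

definition W' :: "('i \<Rightarrow> nat) \<Rightarrow> real" where
  "W' n = (if supp n then (\<Sum>k\<in>I. (dpp (mu t k) (n k) * mu' k) * (\<Prod>l\<in>I - {k}. pp (mu t l) (n l))) else 0)"

lemma W_deriv: "((\<lambda>s. W s n) has_real_derivative W' n) (at t)"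
proof (cases "supp n")
  case True
  have "((\<lambda>s. \<Prod>k\<in>I. pp (mu s k) (n k)) has_real_derivative
          (\<Sum>k\<in>I. (dpp (mu t k) (n k) * mu' k) * (\<Prod>l\<in>I - {k}. pp (mu t l) (n l)))) (at t)"
    by (rule has_field_derivative_prod, unfold dpp_def, rule DERIV_chain2[OF pp_deriv der]) auto
  then show ?thesis using True by (simp add: W_def W'_def)
qed (simp add: W_def W'_def)

lemma Wdiff_bound:
  assumes "\<And>k. k \<in> I \<Longrightarrow> 0 \<le> mu s k \<and> mu s k \<le> L"
    "\<And>k. k \<in> I \<Longrightarrow> 0 \<le> mu t k \<and> mu t k \<le> L"
    "\<And>k. k \<in> I \<Longrightarrow> \<bar>mu s k - mu t k\<bar> \<le> e" "1 \<le> L"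
  shows "\<bar>(W s n - W t n) * g n\<bar> \<le> e * real (card I) * (C * V (4 * L) n)"
proof (cases "supp n")
  case True
  define u where "u k = (2 * L) ^ (n k) / fact (n k)" for k
  have e0: "0 \<le> e" if "I \<noteq> {}"
    using assms(3) that by (meson abs_ge_zero all_not_in_conv order_trans)
  have "\<bar>(\<Prod>k\<in>I. pp (mu s k) (n k)) - (\<Prod>k\<in>I. pp (mu t k) (n k))\<bar>
      \<le> (\<Sum>k\<in>I. (e * u k) * (\<Prod>l\<in>I - {k}. u l))"
  proof (rule prod_diff_bound[OF fin])
    fix k assume k: "k \<in> I"
    show "\<bar>pp (mu s k) (n k)\<bar> \<le> u k" "\<bar>pp (mu t k) (n k)\<bar> \<le> u k"
      using assms k unfolding u_def by (intro pp_bound; auto)+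
    have "\<bar>pp (mu s k) (n k) - pp (mu t k) (n k)\<bar> \<le> \<bar>mu s k - mu t k\<bar> * u k"
      using assms k unfolding u_def by (intro pp_lip) auto
    also have "\<dots> \<le> e * u k"
      using assms k by (intro mult_right_mono) (auto simp: u_def)
    finally show "\<bar>pp (mu s k) (n k) - pp (mu t k) (n k)\<bar> \<le> e * u k" .
  qed
  also have "\<dots> = (\<Sum>k\<in>I. e * (\<Prod>l\<in>I. u l))"
    by (intro sum.cong refl) (simp add: prod.remove[OF fin] mult_ac)
  also have "\<dots> = e * real (card I) * (\<Prod>l\<in>I. u l)"
    by simp
  finally have d: "\<bar>(\<Prod>k\<in>I. pp (mu s k) (n k)) - (\<Prod>k\<in>I. pp (mu t k) (n k))\<bar>
      \<le> e * real (card I) * (\<Prod>l\<in>I. u l)" .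
  have pb: "\<bar>(\<Prod>l\<in>I. u l) * g n\<bar> \<le> C * V (4 * L) n"
    using True assms(4) gb by (intro prod_bound) (auto simp: u_def)
  have u0: "0 \<le> (\<Prod>l\<in>I. u l)" using assms(4) by (auto simp: u_def intro!: prod_nonneg)
  have ecI: "0 \<le> e * real (card I)"
    using e0 by (cases "I = {}") auto
  have "\<bar>(W s n - W t n) * g n\<bar> = \<bar>(\<Prod>k\<in>I. pp (mu s k) (n k)) - (\<Prod>k\<in>I. pp (mu t k) (n k))\<bar> * \<bar>g n\<bar>"
    using True by (simp add: W_def abs_mult)
  also have "\<dots> \<le> e * real (card I) * (\<Prod>l\<in>I. u l) * \<bar>g n\<bar>"
    by (intro mult_right_mono d) auto
  also have "\<dots> = e * real (card I) * \<bar>(\<Prod>l\<in>I. u l) * g n\<bar>"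
    using u0 by (simp add: abs_mult)
  also have "\<dots> \<le> e * real (card I) * (C * V (4 * L) n)"
    by (intro mult_left_mono pb ecI)
  finally show ?thesis .
qed (simp add: W_def V_def)

lemma nbhd:
  obtains K L where "0 \<le> K" "1 \<le> L" "\<And>k. k \<in> I \<Longrightarrow> mu t k \<le> L"
    "eventually (\<lambda>y. y \<in> U \<and> (\<forall>k\<in>I. \<bar>mu y k - mu t k\<bar> \<le> K * \<bar>y - t\<bar>) \<and> (\<forall>k\<in>I. mu y k \<le> L)) (at t)"
proof -
  define K where "K = 1 + (\<Sum>k\<in>I. \<bar>mu' k\<bar>)"
  define L where "L = 1 + (\<Sum>k\<in>I. mu t k) + K"
  have K0: "0 \<le> K" unfolding K_def by (simp add: sum_nonneg add_nonneg_nonneg)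
  have tk: "mu t k \<le> (\<Sum>k\<in>I. mu t k)" if "k \<in> I" for k
    using that nonneg[OF tU] fin by (intro member_le_sum) auto
  have S0: "0 \<le> (\<Sum>k\<in>I. mu t k)" using nonneg[OF tU] by (simp add: sum_nonneg)
  have L1: "1 \<le> L" using K0 S0 by (simp add: L_def)
  have evU: "eventually (\<lambda>y. y \<in> U) (at t)"
    by (rule topological_tendstoD[OF tendsto_ident_at U tU])
  have ev1: "eventually (\<lambda>y. y \<in> ball t 1) (at t)"
    by (rule topological_tendstoD[OF tendsto_ident_at]) auto
  have evne: "eventually (\<lambda>y. y \<noteq> t) (at t)"
    by (rule eventually_neq_at_within)
  have evk: "eventually (\<lambda>y. \<forall>k\<in>I. \<bar>mu y k - mu t k\<bar> \<le> K * \<bar>y - t\<bar>) (at t)"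
  proof (rule eventually_ball_finite[OF fin], intro ballI)
    fix k assume k: "k \<in> I"
    have "((\<lambda>y. (mu y k - mu t k) / (y - t)) \<longlongrightarrow> mu' k) (at t)"
      using der[OF k] by (simp add: has_field_derivative_iff)
    from tendstoD[OF this, of 1]
    have "eventually (\<lambda>y. dist ((mu y k - mu t k) / (y - t)) (mu' k) < 1) (at t)" by simp
    then show "eventually (\<lambda>y. \<bar>mu y k - mu t k\<bar> \<le> K * \<bar>y - t\<bar>) (at t)"
      using evne
    proof eventually_elim
      case (elim y)
      have mk: "\<bar>mu' k\<bar> \<le> (\<Sum>k\<in>I. \<bar>mu' k\<bar>)"
        using k fin by (intro member_le_sum) auto
      have "\<bar>(mu y k - mu t k) / (y - t)\<bar> \<le> \<bar>mu' k\<bar> + 1"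
        using elim(1) unfolding dist_real_def by (smt (verit))
      also have "\<dots> \<le> K" using mk by (simp add: K_def)
      finally have "\<bar>mu y k - mu t k\<bar> / \<bar>y - t\<bar> \<le> K" by (simp add: abs_divide)
      then show ?case using elim by (simp add: divide_le_eq)
    qed
  qed
  have evall: "eventually (\<lambda>y. y \<in> U \<and> (\<forall>k\<in>I. \<bar>mu y k - mu t k\<bar> \<le> K * \<bar>y - t\<bar>) \<and> (\<forall>k\<in>I. mu y k \<le> L)) (at t)"
    using evU ev1 evk
  proof eventually_elim
    case (elim y)
    have "mu y k \<le> L" if k: "k \<in> I" for k
    proof -
      have "mu y k \<le> mu t k + K * \<bar>y - t\<bar>" using elim k by (auto simp: abs_le_iff)
      also have "K * \<bar>y - t\<bar> \<le> K * 1"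
        using elim K0 by (intro mult_left_mono) (auto simp: dist_real_def abs_minus_commute)
      finally show ?thesis using tk[OF k] by (simp add: L_def)
    qed
    then show ?case using elim by auto
  qed
  have tL: "\<And>k. k \<in> I \<Longrightarrow> mu t k \<le> L"
    using tk K0 by (force simp: L_def)
  show ?thesis by (rule that[OF K0 L1 tL evall])
qed

theorem deriv_main:
  "((\<lambda>s. measure_pmf.expectation (P s) g) has_real_derivative
      integral\<^sup>L (count_space UNIV) (\<lambda>n. W' n * g n)) (at t)"
proof -
  obtain K L where K0: "0 \<le> K" and L1: "1 \<le> L" and tL: "\<And>k. k \<in> I \<Longrightarrow> mu t k \<le> L"
    and ev: "eventually (\<lambda>y. y \<in> U \<and> (\<forall>k\<in>I. \<bar>mu y k - mu t k\<bar> \<le> K * \<bar>y - t\<bar>) \<and> (\<forall>k\<in>I. mu y k \<le> L)) (at t)"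
    using nbhd by blast
  define w where "w n = K * real (card I) * (C * V (4 * L) n)" for n
  have wint: "integrable (count_space UNIV) w"
    unfolding w_def using L1 by (intro integrable_mult_right V_integrable) auto
  have tb: "\<And>k. k \<in> I \<Longrightarrow> 0 \<le> mu t k \<and> mu t k \<le> L" using tL nonneg[OF tU] by auto
  have Wint: "integrable (count_space UNIV) (\<lambda>n. W y n * g n)"
    if "\<And>k. k \<in> I \<Longrightarrow> 0 \<le> mu y k \<and> mu y k \<le> L" for y
  proof (rule Bochner_Integration.integrable_bound)
    show "integrable (count_space UNIV) (\<lambda>n. C * V (4 * L) n)"
      using L1 by (intro integrable_mult_right V_integrable) auto
    show "AE n in count_space UNIV. norm (W y n * g n) \<le> norm (C * V (4 * L) n)"
    proof (intro AE_I2)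
      fix n
      have "\<bar>C * V (4 * L) n\<bar> = C * V (4 * L) n"
        using C_nonneg V_nonneg[of "4 * L" n] L1 by simp
      then show "norm (W y n * g n) \<le> norm (C * V (4 * L) n)"
        using W_bound[OF that L1 gb] by simp
    qed
  qed auto
  have lim: "((\<lambda>y. integral\<^sup>L (count_space UNIV) (\<lambda>n. (W y n * g n - W t n * g n) / (y - t)))
      \<longlongrightarrow> integral\<^sup>L (count_space UNIV) (\<lambda>n. W' n * g n)) (at t)"
  proof (rule dc_at[OF wint])
    show "eventually (\<lambda>y. \<forall>n. \<bar>(W y n * g n - W t n * g n) / (y - t)\<bar> \<le> w n) (at t)"
      using ev eventually_neq_at_within[of t t UNIV]
    proof eventually_elim
      case (elim y)
      show ?case
      proof
        fix n
        have yb: "\<And>k. k \<in> I \<Longrightarrow> 0 \<le> mu y k \<and> mu y k \<le> L" using elim nonneg by auto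
        have "\<bar>(W y n - W t n) * g n\<bar> \<le> (K * \<bar>y - t\<bar>) * real (card I) * (C * V (4 * L) n)"
          using elim L1 by (intro Wdiff_bound yb tb) auto
        also have "\<dots> = \<bar>y - t\<bar> * w n" by (simp add: w_def mult_ac)
        finally have "\<bar>(W y n - W t n) * g n\<bar> / \<bar>y - t\<bar> \<le> w n"
          using elim by (simp add: divide_le_eq mult_ac)
        then show "\<bar>(W y n * g n - W t n * g n) / (y - t)\<bar> \<le> w n"
          by (simp add: abs_divide left_diff_distrib)
      qed
    qed
    fix n
    have "((\<lambda>y. (W y n - W t n) / (y - t)) \<longlongrightarrow> W' n) (at t)"
      using W_deriv[of n] by (simp add: has_field_derivative_iff)
    then have "((\<lambda>y. (W y n - W t n) / (y - t) * g n) \<longlongrightarrow> W' n * g n) (at t)"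
      by (rule tendsto_mult_right)
    then show "((\<lambda>y. (W y n * g n - W t n * g n) / (y - t)) \<longlongrightarrow> W' n * g n) (at t)"
      by (simp add: left_diff_distrib)
  qed
  have "((\<lambda>y. (integral\<^sup>L (count_space UNIV) (\<lambda>n. W y n * g n) - integral\<^sup>L (count_space UNIV) (\<lambda>n. W t n * g n)) / (y - t))
      \<longlongrightarrow> integral\<^sup>L (count_space UNIV) (\<lambda>n. W' n * g n)) (at t)"
  proof (rule tendsto_cong[THEN iffD1, OF _ lim])
    show "eventually (\<lambda>y. integral\<^sup>L (count_space UNIV) (\<lambda>n. (W y n * g n - W t n * g n) / (y - t)) =
        (integral\<^sup>L (count_space UNIV) (\<lambda>n. W y n * g n) - integral\<^sup>L (count_space UNIV) (\<lambda>n. W t n * g n)) / (y - t)) (at t)"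
      using ev
    proof eventually_elim
      case (elim y)
      have yb: "\<And>k. k \<in> I \<Longrightarrow> 0 \<le> mu y k \<and> mu y k \<le> L" using elim nonneg by auto
      show ?case
        by (simp add: Bochner_Integration.integral_diff[OF Wint[OF yb] Wint[OF tb]])
    qed
  qed
  then have "((\<lambda>y. integral\<^sup>L (count_space UNIV) (\<lambda>n. W y n * g n)) has_real_derivative
      integral\<^sup>L (count_space UNIV) (\<lambda>n. W' n * g n)) (at t)"
    by (simp add: has_field_derivative_iff)
  then show ?thesis
    by (rule has_field_derivative_transform_within_open[OF _ U tU]) (simp add: E_eq)
qed

definition A :: "'i \<Rightarrow> ('i \<Rightarrow> nat) \<Rightarrow> real" where
  "A k n = (if supp n \<and> n k \<noteq> 0 then pp (mu t k) (n k - 1) * (\<Prod>l\<in>I - {k}. pp (mu t l) (n l)) else 0)"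

lemma W_remove: "k \<in> I \<Longrightarrow> W t n = (if supp n then pp (mu t k) (n k) * (\<Prod>l\<in>I - {k}. pp (mu t l) (n l)) else 0)"
  by (simp add: W_def prod.remove[OF fin])

lemma W'_split: "W' n * g n = (\<Sum>k\<in>I. mu' k * (A k n * g n - W t n * g n))"
proof (cases "supp n")
  case True
  have "W' n * g n = (\<Sum>k\<in>I. (dpp (mu t k) (n k) * mu' k) * (\<Prod>l\<in>I - {k}. pp (mu t l) (n l)) * g n)"
    using True by (simp add: W'_def sum_distrib_right)
  also have "\<dots> = (\<Sum>k\<in>I. mu' k * (A k n * g n - W t n * g n))"
  proof (intro sum.cong refl)
    fix k assume k: "k \<in> I"
    show "(dpp (mu t k) (n k) * mu' k) * (\<Prod>l\<in>I - {k}. pp (mu t l) (n l)) * g n = mu' k * (A k n * g n - W t n * g n)"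
      using True k by (simp add: W_remove A_def dpp_def algebra_simps)
  qed
  finally show ?thesis .
qed (simp add: W'_def W_def A_def)

lemma sum_sh: "k \<in> I \<Longrightarrow> (\<Sum>l\<in>I. (n(k := Suc (n k))) l) = 1 + (\<Sum>l\<in>I. n l)"
  using sum_upd[OF fin, of k n "Suc (n k)"] sum.remove[OF fin, of k n] by simp

lemma gsh_bound: "k \<in> I \<Longrightarrow> \<bar>g (n(k := Suc (n k)))\<bar> \<le> (2 * C) * 2 ^ (\<Sum>l\<in>I. n l)"
  using gb[of "n(k := Suc (n k))"] sum_sh[of k n] by simp

definition L0 :: real where "L0 = 1 + (\<Sum>k\<in>I. mu t k)"

lemma L0_ge1: "1 \<le> L0"
  using nonneg[OF tU] by (simp add: L0_def sum_nonneg)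

lemma L0_bnd: "k \<in> I \<Longrightarrow> 0 \<le> mu t k \<and> mu t k \<le> L0"
proof -
  assume k: "k \<in> I"
  have "mu t k \<le> (\<Sum>k\<in>I. mu t k)"
    using k nonneg[OF tU] fin by (intro member_le_sum) auto
  then show "0 \<le> mu t k \<and> mu t k \<le> L0" using nonneg[OF tU k] by (simp add: L0_def)
qed

lemma int_bound:
  assumes "\<And>n. \<bar>f n\<bar> \<le> C' * V L n" "0 < L"
  shows "integrable (count_space UNIV) f"
proof (rule Bochner_Integration.integrable_bound)
  show "integrable (count_space UNIV) (\<lambda>n. C' * V L n)"
    using assms by (intro integrable_mult_right V_integrable) auto
  show "AE n in count_space UNIV. norm (f n) \<le> norm (C' * V L n)"
    by (intro AE_I2) (simp add: order_trans[OF assms(1) abs_ge_self])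
qed auto

lemma L0pos: "0 < 4 * L0" using L0_ge1 by simp

lemma int_Wg: "integrable (count_space UNIV) (\<lambda>n. W t n * g n)"
  by (rule int_bound[OF W_bound[OF L0_bnd L0_ge1 gb] L0pos])

lemma int_Wgsh: "k \<in> I \<Longrightarrow> integrable (count_space UNIV) (\<lambda>n. W t n * g (n(k := Suc (n k))))"
  by (rule int_bound[OF W_bound[OF L0_bnd L0_ge1 gsh_bound] L0pos])

lemma int_Ag:
  assumes k: "k \<in> I"
  shows "integrable (count_space UNIV) (\<lambda>n. A k n * g n)"
proof (rule int_bound[OF _ L0pos, where C'=C])
  fix n
  show "\<bar>A k n * g n\<bar> \<le> C * V (4 * L0) n"
  proof (cases "supp n \<and> n k \<noteq> 0")
    case True
    define a where "a l = (if l = k then pp (mu t k) (n k - 1) else pp (mu t l) (n l))" for l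
    have "A k n = (\<Prod>l\<in>I. a l)"
      using True k by (simp add: A_def prod.remove[OF fin] a_def)
    moreover have "\<bar>(\<Prod>l\<in>I. a l) * g n\<bar> \<le> C * V (4 * L0) n"
    proof (rule prod_bound)
      fix l assume l: "l \<in> I"
      show "\<bar>a l\<bar> \<le> (2 * L0) ^ n l / fact (n l)"
      proof (cases "l = k")
        case lk: True
        have "a l = pp (mu t k) (n k - 1)" using lk by (simp add: a_def)
        moreover have "\<bar>pp (mu t k) (n k - 1)\<bar> \<le> (2 * L0) ^ n k / fact (n k)"
          using L0_bnd[OF k] L0_ge1 True by (intro pp_pred_bound) auto
        ultimately show ?thesis using lk by simp
      next
        case False
        have "a l = pp (mu t l) (n l)" using False by (simp add: a_def)
        moreover have "\<bar>pp (mu t l) (n l)\<bar> \<le> (2 * L0) ^ n l / fact (n l)"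
          using L0_bnd[OF l] L0_ge1 by (intro pp_bound) auto
        ultimately show ?thesis by simp
      qed
    qed (use True gb L0_ge1 in auto)
    ultimately show ?thesis by simp
  next
    case False
    have "A k n = 0" unfolding A_def using False by (rule if_not_P)
    then show ?thesis using C_nonneg V_nonneg[of "4 * L0" n] L0_ge1 by simp
  qed
qed

lemma supp_upd: "supp m \<Longrightarrow> k \<in> I \<Longrightarrow> supp (m(k := v))"
  by (auto simp: supp_def)

lemma A_reindex:
  assumes k: "k \<in> I"
  shows "integral\<^sup>L (count_space UNIV) (\<lambda>n. A k n * g n) =
         integral\<^sup>L (count_space UNIV) (\<lambda>m. W t m * g (m(k := Suc (m k))))"
proof -
  define sh where "sh m = m(k := Suc (m k))" for m :: "'i \<Rightarrow> nat"
  define S where "S = {m. supp m}"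
  define R where "R = {n. supp n \<and> n k \<noteq> 0}"
  have bij: "bij_betw sh S R"
  proof (rule bij_betw_byWitness[where f' = "\<lambda>n. n(k := n k - 1)"])
    show "\<forall>a\<in>S. (sh a)(k := sh a k - 1) = a" by (auto simp: sh_def)
    show "\<forall>a'\<in>R. sh (a'(k := a' k - 1)) = a'" by (auto simp: sh_def R_def)
    show "sh ` S \<subseteq> R" using k by (auto simp: sh_def S_def R_def supp_upd)
    show "(\<lambda>n. n(k := n k - 1)) ` R \<subseteq> S" using k by (auto simp: S_def R_def supp_upd)
  qed
  have Ash: "A k (sh m) = W t m" if "m \<in> S" for m
  proof -
    have "(\<Prod>l\<in>I - {k}. pp (mu t l) (sh m l)) = (\<Prod>l\<in>I - {k}. pp (mu t l) (m l))"
      by (intro prod.cong) (auto simp: sh_def)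
    then show ?thesis using that k by (simp add: A_def W_remove S_def supp_upd sh_def)
  qed
  have "integral\<^sup>L (count_space UNIV) (\<lambda>n. A k n * g n) = infsetsum (\<lambda>n. A k n * g n) UNIV"
    by (simp add: infsetsum_def)
  also have "\<dots> = infsetsum (\<lambda>n. A k n * g n) R"
    by (rule infsetsum_cong_neutral) (auto simp: R_def A_def)
  also have "\<dots> = infsetsum (\<lambda>m. A k (sh m) * g (sh m)) S"
    by (rule infsetsum_reindex_bij_betw[OF bij, symmetric])
  also have "\<dots> = infsetsum (\<lambda>m. W t m * g (sh m)) S"
    by (rule infsetsum_cong) (auto simp: Ash)
  also have "\<dots> = infsetsum (\<lambda>m. W t m * g (sh m)) UNIV"
    by (rule infsetsum_cong_neutral) (auto simp: S_def W_def)
  finally show ?thesis by (simp add: infsetsum_def sh_def)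
qed

theorem deriv_final:
  "((\<lambda>s. measure_pmf.expectation (P s) g) has_real_derivative
      (\<Sum>k\<in>I. mu' k * measure_pmf.expectation (P t) (\<lambda>n. g (n(k := Suc (n k))) - g n))) (at t)"
proof -
  have "integral\<^sup>L (count_space UNIV) (\<lambda>n. W' n * g n)
      = integral\<^sup>L (count_space UNIV) (\<lambda>n. \<Sum>k\<in>I. mu' k * (A k n * g n - W t n * g n))"
    by (simp add: W'_split)
  also have "\<dots> = (\<Sum>k\<in>I. integral\<^sup>L (count_space UNIV) (\<lambda>n. mu' k * (A k n * g n - W t n * g n)))"
    by (rule Bochner_Integration.integral_sum)
       (auto intro!: integrable_mult_right Bochner_Integration.integrable_diff int_Ag int_Wg)
  also have "\<dots> = (\<Sum>k\<in>I. mu' k * measure_pmf.expectation (P t) (\<lambda>n. g (n(k := Suc (n k))) - g n))"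
  proof (intro sum.cong refl)
    fix k assume k: "k \<in> I"
    have "integral\<^sup>L (count_space UNIV) (\<lambda>n. mu' k * (A k n * g n - W t n * g n))
        = mu' k * (integral\<^sup>L (count_space UNIV) (\<lambda>n. A k n * g n) - integral\<^sup>L (count_space UNIV) (\<lambda>n. W t n * g n))"
      by (simp add: Bochner_Integration.integral_diff[OF int_Ag[OF k] int_Wg])
    also have "\<dots> = mu' k * (integral\<^sup>L (count_space UNIV) (\<lambda>m. W t m * g (m(k := Suc (m k)))) - integral\<^sup>L (count_space UNIV) (\<lambda>n. W t n * g n))"
      by (simp add: A_reindex[OF k])
    also have "\<dots> = mu' k * integral\<^sup>L (count_space UNIV) (\<lambda>n. W t n * (g (n(k := Suc (n k))) - g n))"
      by (simp add: Bochner_Integration.integral_diff[OF int_Wgsh[OF k] int_Wg, symmetric] right_diff_distrib)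
    also have "\<dots> = mu' k * measure_pmf.expectation (P t) (\<lambda>n. g (n(k := Suc (n k))) - g n)"
      by (simp add: E_eq[OF tU])
    finally show "integral\<^sup>L (count_space UNIV) (\<lambda>n. mu' k * (A k n * g n - W t n * g n)) = \<dots>" .
  qed
  finally show ?thesis using deriv_main by simp
qed

end

lemma card_configs: "card (configs q N) = q ^ N" and fin_configs: "finite (configs q N)"
  by (simp_all add: configs_def card_PiE finite_PiE)

lemma hamil_scale_nonneg:
  "0 \<le> \<beta> \<Longrightarrow> 0 \<le> hamil N \<sigma> (scaleJ \<beta> J)"
  by (auto simp: hamil_def scaleJ_def kdelta_def intro!: sum_nonneg)

lemma hamil_scale_le:
  assumes "0 \<le> \<beta>"
  shows "hamil N \<sigma> (scaleJ \<beta> J) \<le> \<beta> * real (\<Sum>k\<in>{..<N} \<times> {..<N}. J k)"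
proof -
  have "hamil N \<sigma> (scaleJ \<beta> J) \<le> (\<Sum>i<N. \<Sum>j<N. \<beta> * real (J (i, j)))"
    unfolding hamil_def scaleJ_def using assms
    by (intro sum_mono) (auto simp: kdelta_def)
  also have "\<dots> = \<beta> * real (\<Sum>k\<in>{..<N} \<times> {..<N}. J k)"
    by (simp add: sum.cartesian_product sum_distrib_left case_prod_unfold)
  finally show ?thesis .
qed

lemma partfun_bounds:
  fixes N :: nat and J :: "nat \<times> nat \<Rightarrow> nat"
  assumes "0 \<le> \<beta>" "1 \<le> q"
  defines "S \<equiv> real (\<Sum>k\<in>{..<N} \<times> {..<N}. J k)"
  shows "real q ^ N * exp (- (\<beta> * S)) \<le> partfun q N (scaleJ \<beta> J)"
    and "partfun q N (scaleJ \<beta> J) \<le> real q ^ N"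
proof -
  have "(\<Sum>\<sigma>\<in>configs q N. exp (- (\<beta> * S))) \<le> partfun q N (scaleJ \<beta> J)"
    unfolding partfun_def using hamil_scale_le[OF assms(1)] by (intro sum_mono) (auto simp: S_def)
  then show "real q ^ N * exp (- (\<beta> * S)) \<le> partfun q N (scaleJ \<beta> J)"
    by (simp add: card_configs)
  have "partfun q N (scaleJ \<beta> J) \<le> (\<Sum>\<sigma>\<in>configs q N. 1)"
    unfolding partfun_def using hamil_scale_nonneg[OF assms(1)] by (intro sum_mono) auto
  then show "partfun q N (scaleJ \<beta> J) \<le> real q ^ N"
    by (simp add: card_configs)
qed

lemma partfun_pos: "0 < partfun q N J" if "1 \<le> q"
proof -
  have "configs q N \<noteq> {}" using that by (auto simp: configs_def PiE_eq_empty_iff)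
  then show ?thesis unfolding partfun_def
    by (intro sum_pos fin_configs) auto
qed

lemma ln_partfun_bound:
  assumes "0 \<le> \<beta>" "1 \<le> q" "1 \<le> N"
  shows "\<bar>ln (partfun q N (scaleJ \<beta> J)) / real N\<bar> \<le> (ln (real q ^ N) + \<beta>) * 2 ^ (\<Sum>k\<in>{..<N} \<times> {..<N}. J k)"
proof -
  define S where "S = (\<Sum>k\<in>{..<N} \<times> {..<N}. J k)"
  define Z where "Z = partfun q N (scaleJ \<beta> J)"
  have qN: "1 \<le> real q ^ N" using assms by simp
  have Z0: "0 < Z" unfolding Z_def using assms by (intro partfun_pos) auto
  have lo: "real q ^ N * exp (- (\<beta> * real S)) \<le> Z" and hi: "Z \<le> real q ^ N"
    using partfun_bounds[OF assms(1,2), of N J] by (simp_all add: Z_def S_def)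
  have "ln Z \<le> ln (real q ^ N)" using hi Z0 qN assms(2) by (subst ln_le_cancel_iff) auto
  moreover have "ln (real q ^ N * exp (- (\<beta> * real S))) \<le> ln Z"
  proof -
    have "0 < real q ^ N" using qN by linarith
    then have "0 < real q ^ N * exp (- (\<beta> * real S))" by simp
    then show ?thesis using lo Z0 by (subst ln_le_cancel_iff) auto
  qed
  hence "ln (real q ^ N) - \<beta> * real S \<le> ln Z"
    using qN assms(2) by (simp add: ln_mult)
  moreover have lq: "0 \<le> ln (real q ^ N)" using qN by simp
  ultimately have a: "\<bar>ln Z\<bar> \<le> ln (real q ^ N) + \<beta> * real S"
    using assms(1) by (simp add: abs_le_iff)
  have Sle: "real S \<le> 2 ^ S"
  proof -
    have "S < 2 ^ S" by (rule less_exp)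
    then show ?thesis by (metis less_imp_le of_nat_le_iff of_nat_numeral of_nat_power)
  qed
  have one: "1 \<le> (2::real) ^ S" by simp
  have "\<bar>ln Z / real N\<bar> \<le> \<bar>ln Z\<bar>"
  proof -
    have "\<bar>ln Z\<bar> * 1 \<le> \<bar>ln Z\<bar> * real N" using assms(3) by (intro mult_left_mono) auto
    then show ?thesis using assms(3) by (simp add: abs_divide divide_le_eq)
  qed
  also have "\<dots> \<le> ln (real q ^ N) + \<beta> * real S" by (rule a)
  also have "\<dots> \<le> ln (real q ^ N) * 2 ^ S + \<beta> * 2 ^ S"
    using lq one Sle assms(1) by (intro add_mono mult_left_mono) (auto simp: mult_le_cancel_left1)
  finally show ?thesis by (simp add: Z_def S_def algebra_simps)
qed

lemma hamil_inc:
  assumes "i < N" "j < N"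
  shows "hamil N \<sigma> (scaleJ \<beta> (J((i, j) := Suc (J (i, j))))) = hamil N \<sigma> (scaleJ \<beta> J) + \<beta> * kdelta (\<sigma> i) (\<sigma> j)"
proof -
  have eq: "scaleJ \<beta> (J((i, j) := Suc (J (i, j)))) a b * kdelta (\<sigma> a) (\<sigma> b)
      = scaleJ \<beta> J a b * kdelta (\<sigma> a) (\<sigma> b) + (if a = i then (if b = j then \<beta> * kdelta (\<sigma> i) (\<sigma> j) else 0) else 0)" for a b
    by (auto simp: scaleJ_def algebra_simps)
  show ?thesis
  proof -
    have "(\<Sum>a<N. \<Sum>b<N. (if a = i then (if b = j then \<beta> * kdelta (\<sigma> i) (\<sigma> j) else 0) else 0))
        = (\<Sum>a<N. (if a = i then \<beta> * kdelta (\<sigma> i) (\<sigma> j) else 0))"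
      by (intro sum.cong refl) (use assms in \<open>simp add: sum.delta\<close>)
    also have "\<dots> = \<beta> * kdelta (\<sigma> i) (\<sigma> j)" using assms by (simp add: sum.delta)
    finally show ?thesis unfolding hamil_def eq sum.distrib by simp
  qed
qed

lemma partfun_inc:
  assumes "i < N" "j < N"
  shows "partfun q N (scaleJ \<beta> (J((i, j) := Suc (J (i, j)))))
    = partfun q N (scaleJ \<beta> J) - (1 - exp (- \<beta>)) * (\<Sum>\<sigma>\<in>configs q N. kdelta (\<sigma> i) (\<sigma> j) * exp (- hamil N \<sigma> (scaleJ \<beta> J)))"
proof -
  have "exp (- hamil N \<sigma> (scaleJ \<beta> (J((i, j) := Suc (J (i, j))))))
      = exp (- hamil N \<sigma> (scaleJ \<beta> J)) - (1 - exp (- \<beta>)) * (kdelta (\<sigma> i) (\<sigma> j) * exp (- hamil N \<sigma> (scaleJ \<beta> J)))" for \<sigma>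
    unfolding hamil_inc[OF assms] by (auto simp: kdelta_def exp_diff exp_add exp_minus field_simps)
  then show ?thesis
    unfolding partfun_def by (simp add: sum_subtractf sum_distrib_left)
qed

lemma ln_ratio:
  assumes "i < N" "j < N" "1 \<le> q"
  shows "ln (1 - (1 - exp (- \<beta>)) * gibbs_avg q N (scaleJ \<beta> J) (\<lambda>\<sigma>. kdelta (\<sigma> i) (\<sigma> j)))
    = ln (partfun q N (scaleJ \<beta> (J((i, j) := Suc (J (i, j)))))) - ln (partfun q N (scaleJ \<beta> J))"
proof -
  define Z where "Z = partfun q N (scaleJ \<beta> J)"
  define Z' where "Z' = partfun q N (scaleJ \<beta> (J((i, j) := Suc (J (i, j)))))"
  define T where "T = (\<Sum>\<sigma>\<in>configs q N. kdelta (\<sigma> i) (\<sigma> j) * exp (- hamil N \<sigma> (scaleJ \<beta> J)))"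
  have Z0: "0 < Z" "0 < Z'" unfolding Z_def Z'_def using assms by (auto intro: partfun_pos)
  have ga: "gibbs_avg q N (scaleJ \<beta> J) (\<lambda>\<sigma>. kdelta (\<sigma> i) (\<sigma> j)) = T / Z"
    by (simp add: gibbs_avg_def gibbs_def T_def Z_def sum_divide_distrib)
  have "1 - (1 - exp (- \<beta>)) * (T / Z) = Z' / Z"
    using Z0 partfun_inc[OF assms(1,2), of q \<beta> J] by (simp add: Z_def Z'_def T_def field_simps)
  then show ?thesis using Z0 by (simp add: ga ln_div Z_def Z'_def)
qed


theorem mainTheorem2:
  fixes q N :: nat and \<beta> :: real and U :: "real set"
    and c c' :: "real \<Rightarrow> nat \<Rightarrow> nat \<Rightarrow> real" and t :: real
  assumes "q \<ge> 2" and "N \<ge> 1" and "\<beta> \<ge> 0"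
    and "open U" and "t \<in> U"
    and "\<And>s i j. s \<in> U \<Longrightarrow> i < N \<Longrightarrow> j < N \<Longrightarrow> c s i j \<ge> 0"
    and "\<And>s i j. s \<in> U \<Longrightarrow> i < N \<Longrightarrow> j < N \<Longrightarrow>
           ((\<lambda>r. c r i j) has_real_derivative c' s i j) (at s)"
  shows "((\<lambda>s. pressure q N \<beta> (c s)) has_real_derivative
           (1 / (2 * real N ^ 2)) * (\<Sum>i<N. \<Sum>j<N. c' t i j *
              EJ N (c t) (\<lambda>J. ln (1 - (1 - exp (- \<beta>)) *
                 gibbs_avg q N (scaleJ \<beta> J) (\<lambda>\<sigma>. kdelta (\<sigma> i) (\<sigma> j)))))) (at t)"
proof -
  define I where "I = {..<N} \<times> {..<N}"
  define mu where "mu s k = c s (fst k) (snd k) / (2 * real N)" for s k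
  define mu' where "mu' k = c' t (fst k) (snd k) / (2 * real N)" for k
  define g where "g J = ln (partfun q N (scaleJ \<beta> J)) / real N" for J
  define C where "C = ln (real q ^ N) + \<beta>"
  have q1: "1 \<le> q" using assms(1) by simp
  interpret PS I mu mu' g C U t
  proof
    show "finite I" by (simp add: I_def)
    show "open U" "t \<in> U" by (fact assms(4)) (fact assms(5))
    show "0 \<le> mu s k" if "s \<in> U" "k \<in> I" for s k
      using assms(6)[OF that(1), of "fst k" "snd k"] that(2) by (auto simp: mu_def I_def)
    show "((\<lambda>s. mu s k) has_real_derivative mu' k) (at t)" if "k \<in> I" for k
      unfolding mu_def mu'_def
      by (rule DERIV_cdivide, rule assms(7)[OF assms(5)]) (use that in \<open>auto simp: I_def\<close>)
    show "\<bar>g n\<bar> \<le> C * 2 ^ (\<Sum>k\<in>I. n k)" for n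
      unfolding g_def C_def I_def by (rule ln_partfun_bound[OF assms(3) q1 assms(2)])
  qed
  have Peq: "J_law N (c s) = P s" for s
    unfolding P_def by (simp add: J_law_def I_def mu_def case_prod_unfold)
  have pr: "pressure q N \<beta> (c s) = measure_pmf.expectation (P s) g" for s
    unfolding pressure_def EJ_def Peq g_def[abs_def] by (rule refl)
  have trm: "mu' k * measure_pmf.expectation (P t) (\<lambda>n. g (n(k := Suc (n k))) - g n)
      = (1 / (2 * real N ^ 2)) * (c' t (fst k) (snd k) * EJ N (c t) (\<lambda>J. ln (1 - (1 - exp (- \<beta>)) *
                 gibbs_avg q N (scaleJ \<beta> J) (\<lambda>\<sigma>. kdelta (\<sigma> (fst k)) (\<sigma> (snd k))))))"
    if k: "k \<in> I" for k
  proof -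
    obtain i j where ij: "k = (i, j)" "i < N" "j < N" using k by (auto simp: I_def)
    have "(\<lambda>n. g (n(k := Suc (n k))) - g n) = (\<lambda>J. ln (1 - (1 - exp (- \<beta>)) *
                 gibbs_avg q N (scaleJ \<beta> J) (\<lambda>\<sigma>. kdelta (\<sigma> i) (\<sigma> j))) / real N)"
      by (rule ext) (simp add: g_def ij ln_ratio[OF ij(2,3) q1] diff_divide_distrib)
    then show ?thesis using assms(2)
      by (simp add: ij EJ_def Peq mu'_def power2_eq_square field_simps)
  qed
  have val: "(\<Sum>k\<in>I. mu' k * measure_pmf.expectation (P t) (\<lambda>n. g (n(k := Suc (n k))) - g n))
      = (1 / (2 * real N ^ 2)) * (\<Sum>i<N. \<Sum>j<N. c' t i j *
              EJ N (c t) (\<lambda>J. ln (1 - (1 - exp (- \<beta>)) *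
                 gibbs_avg q N (scaleJ \<beta> J) (\<lambda>\<sigma>. kdelta (\<sigma> i) (\<sigma> j)))))"
  proof -
    define F where "F i j = c' t i j * EJ N (c t) (\<lambda>J. ln (1 - (1 - exp (- \<beta>)) *
                 gibbs_avg q N (scaleJ \<beta> J) (\<lambda>\<sigma>. kdelta (\<sigma> i) (\<sigma> j))))" for i j
    have "(\<Sum>k\<in>I. mu' k * measure_pmf.expectation (P t) (\<lambda>n. g (n(k := Suc (n k))) - g n))
        = (\<Sum>k\<in>I. (1 / (2 * real N ^ 2)) * F (fst k) (snd k))"
      by (intro sum.cong refl) (simp add: trm F_def)
    also have "\<dots> = (1 / (2 * real N ^ 2)) * (\<Sum>k\<in>I. F (fst k) (snd k))"
      by (simp add: sum_distrib_left)
    also have "(\<Sum>k\<in>I. F (fst k) (snd k)) = (\<Sum>i<N. \<Sum>j<N. F i j)"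
      unfolding I_def sum.cartesian_product by (simp add: case_prod_unfold)
    finally show ?thesis by (simp only: F_def)
  qed
  show ?thesis
    unfolding pr val[symmetric] by (rule deriv_final)
qed

end
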